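(* Let $\mathbb F$ be a field, let $\chi,\eta\in\mathbb F[x]$ be monic polynomials of degree $l\ge1$, and let $a,b,c,d\in\mathbb F$ with $ad-bc\ne0$. (a) If the matrix pair $(aI_l+b\Phi_\chi,\ cI_l+d\Phi_\chi)$ is equivalent to the pair $(I_l,\Phi_\eta)$, then \[ \eta(x)=\varepsilon\,(d-xb)^l\,\chi\!\left(\frac{xa-c}{d-xb}\right) \] for some $\varepsilon\in\mathbb F$. (b) If $aI_l+b\Phi_\chi$ is nonsingular and $\eta(x)=\varepsilon\,(d-xb)^l\,\chi\!\left(\frac{xa-c}{d-xb}\right)$ for some $\varepsilon\in\mathbb F$, then the characteristic polynomials of $(cI_l+d\Phi_\chi)(aI_l+b\Phi_\chi)^{-1}$ and of $\Phi_\eta$ are equal.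
   Context: For a monic $\chi(x)=x^l-u_1x^{l-1}-\dots-u_l\in\mathbb F[x]$, $l\ge1$, $\Phi_\chi$ is the $l\times l$ companion matrix with ones on the subdiagonal, last column $(u_l,\dots,u_2,u_1)^T$ (top to bottom), and zeros elsewhere; its characteristic polynomial is $\chi$. Two pairs $(A,B)$, $(A',B')$ of matrices of the same size are equivalent if there exist nonsingular $P,Q$ with $A'=PAQ$ and $B'=PBQ$. The expression $(d-xb)^l\chi\left(\frac{xa-c}{d-xb}\right)$ denotes the polynomial obtained by clearing denominators (a polynomial since $\deg\chi=l$). *)

theory Defs
  imports "Jordan_Normal_Form.Char_Poly"
begin

text \<open>Companion matrix of a monic polynomial chi of degree l (0-indexed rows/columns):
  ones on the subdiagonal, last column (u_l, ..., u_1) top to bottom, where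
  chi = x^l - u_1 x^(l-1) - ... - u_l, i.e. u_k = - coeff chi (l - k);
  so row i of the last column holds u_(l-i) = - coeff chi i.\<close>
definition companion :: "'a::comm_ring_1 poly \<Rightarrow> 'a mat" where
  "companion chi = (let l = degree chi in
     mat l l (\<lambda>(i, j). if j = l - 1 then - coeff chi i
                       else if i = j + 1 then 1 else 0))"

definition pair_equiv :: "'a::semiring_1 mat \<Rightarrow> 'a mat \<Rightarrow> 'a mat \<Rightarrow> 'a mat \<Rightarrow> bool" where
  "pair_equiv A B A' B' \<longleftrightarrow>
     (\<exists>P Q. P \<in> carrier_mat (dim_row A) (dim_row A) \<and> Q \<in> carrier_mat (dim_col A) (dim_col A) \<and>
            invertible_mat P \<and> invertible_mat Q \<and> A' = P * A * Q \<and> B' = P * B * Q)"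

text \<open>(d - x b)^l chi((x a - c)/(d - x b)) with denominators cleared:
  sum over i of coeff chi i * (x a - c)^i * (d - x b)^(l - i).\<close>
definition mobius_poly :: "'a::comm_ring_1 \<Rightarrow> 'a \<Rightarrow> 'a \<Rightarrow> 'a \<Rightarrow> nat \<Rightarrow> 'a poly \<Rightarrow> 'a poly" where
  "mobius_poly a b c d l chi =
     (\<Sum>i\<le>l. Polynomial.smult (coeff chi i) ([:-c, a:] ^ i * [:d, -b:] ^ (l - i)))"

end

theory Submission
  imports Defs
begin

definition cm :: "(nat \<Rightarrow> 'b::comm_ring_1) \<Rightarrow> nat \<Rightarrow> 'b mat" where
  "cm u n = mat n n (\<lambda>(i,j). if j = n - 1 then - u i else if i = j + 1 then 1 else 0)"

lemma det_cm: "det (p \<cdot>\<^sub>m 1\<^sub>m n - q \<cdot>\<^sub>m cm u n) = p^n + (\<Sum>i<n. u i * p^i * q^(n-i))"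
proof (induction n arbitrary: u)
  case 0
  have "p \<cdot>\<^sub>m 1\<^sub>m 0 - q \<cdot>\<^sub>m cm u 0 = 1\<^sub>m 0" by (rule eq_matI) (auto simp: cm_def)
  then show ?case by simp
next
  case (Suc n)
  define A where "A = p \<cdot>\<^sub>m 1\<^sub>m (Suc n) - q \<cdot>\<^sub>m cm u (Suc n)"
  have A: "A \<in> carrier_mat (Suc n) (Suc n)" unfolding A_def cm_def by auto
  have Aij: "A $$ (i,j) = (if i = j then p else 0) - q * (if j = n then - u i else if i = j + 1 then 1 else 0)"
    if "i < Suc n" "j < Suc n" for i j
    using that unfolding A_def cm_def by auto
  have lap: "det A = (\<Sum>j<Suc n. A $$ (0,j) * cofactor A 0 j)"
    by (rule laplace_expansion_row[OF A]) auto
  show ?case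
  proof (cases n)
    case 0
    have "mat_delete A 0 0 = 1\<^sub>m 0" by (rule eq_matI) (use A 0 in auto)
    then show ?thesis using lap 0 Aij[of 0 0] unfolding A_def[symmetric] cofactor_def by (simp add: algebra_simps)
  next
    case (Suc m)
    have d00: "mat_delete A 0 0 = p \<cdot>\<^sub>m 1\<^sub>m n - q \<cdot>\<^sub>m cm (\<lambda>i. u (Suc i)) n"
      by (rule eq_matI) (use A in \<open>auto simp: mat_delete_def Aij cm_def\<close>)
    have ut: "upper_triangular (mat_delete A 0 n)"
      unfolding upper_triangular_def using A by (auto simp: mat_delete_def Aij)
    have dc: "mat_delete A 0 n \<in> carrier_mat n n" using A by (auto simp: mat_delete_def)
    have "diag_mat (mat_delete A 0 n) = replicate n (-q)"
      by (rule nth_equalityI) (use A in \<open>auto simp: diag_mat_def mat_delete_def Aij\<close>)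
    then have d0n: "det (mat_delete A 0 n) = (-q)^n"
      using det_upper_triangular[OF ut dc] by simp
    have "det A = (\<Sum>j<Suc n. (if j = 0 then p * det (mat_delete A 0 0) else 0)
        + (if j = n then q * u 0 * ((-1)^n * (-q)^n) else 0))"
      unfolding lap
    proof (rule sum.cong[OF refl])
      fix j assume j: "j \<in> {..<Suc n}"
      show "A $$ (0, j) * cofactor A 0 j = (if j = 0 then p * det (mat_delete A 0 0) else 0)
        + (if j = n then q * u 0 * ((-1)^n * (-q)^n) else 0)"
        using j \<open>n = Suc m\<close> d0n by (cases "j = 0"; cases "j = n") (auto simp add: Aij cofactor_def simp del: power_Suc)
    qed
    also have "\<dots> = p * det (mat_delete A 0 0) + q * u 0 * ((-1)^n * (-q)^n)"
      by (simp add: sum.distrib)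
    also have "(-1)^n * (-q)^n = q^n" by (simp flip: power_mult_distrib)
    also have "det (mat_delete A 0 0) = p ^ n + (\<Sum>i<n. u (Suc i) * p ^ i * q ^ (n - i))"
      unfolding d00 by (rule Suc.IH)
    finally have "det A = p * (p ^ n + (\<Sum>i<n. u (Suc i) * p ^ i * q ^ (n - i))) + q * u 0 * q ^ n" .
    moreover have "(\<Sum>i<Suc n. u i * p^i * q^(Suc n - i)) = u 0 * q^(Suc n) + (\<Sum>i<n. u (Suc i) * p^(Suc i) * q^(n-i))"
      by (subst sum.lessThan_Suc_shift) simp
    moreover have "p * (\<Sum>i<n. u (Suc i) * p ^ i * q ^ (n - i)) = (\<Sum>i<n. u (Suc i) * p^(Suc i) * q^(n-i))"
      by (simp add: sum_distrib_left algebra_simps)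
    ultimately show ?thesis unfolding A_def[symmetric]
      by (simp add: algebra_simps)
  qed
qed
interpretation cph: comm_ring_hom "\<lambda>x::'a::comm_ring_1. [:x:]"
  by unfold_locales auto

lemma neg1_poly: "[:-1:] = (-1::'a::comm_ring_1 poly)"
  by (rule poly_eqI) (simp add: coeff_pCons split: nat.split)

lemma companion_cm: "companion chi = cm (coeff chi) (degree chi)"
  unfolding companion_def cm_def Let_def by simp

lemma companion_carrier: "companion chi \<in> carrier_mat (degree chi) (degree chi)"
  unfolding companion_cm cm_def by simp

lemma map_cm: "map_mat (\<lambda>x. [:x:]) (cm u n) = cm (\<lambda>i. [:u i:]) n"
  by (rule eq_matI) (auto simp: cm_def)

lemma char_poly_companion:
  assumes "monic eta"
  shows "char_poly (companion eta) = eta"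
proof -
  let ?l = "degree eta"
  have "char_poly_matrix (companion eta) = [:0,1:] \<cdot>\<^sub>m 1\<^sub>m ?l - 1 \<cdot>\<^sub>m cm (\<lambda>i. [:coeff eta i:]) ?l"
    unfolding char_poly_matrix_def by (rule eq_matI) (auto simp: companion_cm cm_def neg1_poly)
  then have "char_poly (companion eta) = [:0,1:]^?l + (\<Sum>i<?l. [:coeff eta i:] * [:0,1:]^i)"
    unfolding char_poly_def using det_cm[of "[:0,1:]" ?l 1 "\<lambda>i. [:coeff eta i:]"] by simp
  also have "\<dots> = (\<Sum>i\<le>?l. monom (coeff eta i) i)"
    using assms by (simp add: lessThan_Suc_atMost[symmetric] monom_altdef)
  also have "\<dots> = eta" by (rule poly_as_sum_of_monoms)
  finally show ?thesis .
qed

lemma N_eq: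
  fixes a b c d :: "'a::comm_ring_1"
  assumes "degree chi = l"
  shows "[:0,1:] \<cdot>\<^sub>m map_mat (\<lambda>x.[:x:]) (a \<cdot>\<^sub>m 1\<^sub>m l + b \<cdot>\<^sub>m companion chi)
     - map_mat (\<lambda>x.[:x:]) (c \<cdot>\<^sub>m 1\<^sub>m l + d \<cdot>\<^sub>m companion chi)
   = [:-c,a:] \<cdot>\<^sub>m 1\<^sub>m l - [:d,-b:] \<cdot>\<^sub>m cm (\<lambda>i.[:coeff chi i:]) l"
  by (rule eq_matI) (auto simp: companion_cm cm_def assms)

lemma mobius_alt:
  assumes "monic chi" "degree chi = l"
  shows "mobius_poly a b c d l chi = [:-c,a:]^l + (\<Sum>i<l. [:coeff chi i:] * [:-c,a:]^i * [:d,-b:]^(l-i))"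
  unfolding mobius_poly_def using assms
  by (simp add: lessThan_Suc_atMost[symmetric] mult.assoc)

lemma det_N:
  fixes a b c d :: "'a::comm_ring_1"
  assumes "monic chi" "degree chi = l"
  shows "det ([:0,1:] \<cdot>\<^sub>m map_mat (\<lambda>x.[:x:]) (a \<cdot>\<^sub>m 1\<^sub>m l + b \<cdot>\<^sub>m companion chi)
     - map_mat (\<lambda>x.[:x:]) (c \<cdot>\<^sub>m 1\<^sub>m l + d \<cdot>\<^sub>m companion chi)) = mobius_poly a b c d l chi"
  unfolding N_eq[OF assms(2)] det_cm mobius_alt[OF assms] by simp

lemma H1:
  fixes x :: "'b::comm_ring_1"
  assumes "P \<in> carrier_mat n n" "A \<in> carrier_mat n n" "B \<in> carrier_mat n n" "Q \<in> carrier_mat n n"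
  shows "P * (x \<cdot>\<^sub>m A - B) * Q = x \<cdot>\<^sub>m (P * A * Q) - P * B * Q"
proof -
  have "P * (x \<cdot>\<^sub>m A - B) = x \<cdot>\<^sub>m (P * A) - P * B"
    using mult_minus_distrib_mat[OF assms(1) smult_carrier_mat[OF assms(2)] assms(3)] mult_smult_distrib[OF assms(1,2)] by simp
  moreover have "(x \<cdot>\<^sub>m (P * A) - P * B) * Q = x \<cdot>\<^sub>m (P * A * Q) - P * B * Q"
    using minus_mult_distrib_mat[OF smult_carrier_mat[OF mult_carrier_mat[OF assms(1,2)]] mult_carrier_mat[OF assms(1,3)] assms(4)]
      mult_smult_assoc_mat[OF mult_carrier_mat[OF assms(1,2)] assms(4)] by simp
  ultimately show ?thesis by simp
qed

theorem lemma2: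
  fixes chi eta :: "'a::field poly" and a b c d :: 'a and l :: nat
  assumes "monic chi" and "monic eta"
    and "degree chi = l" and "degree eta = l" and "l \<ge> 1"
    and "a * d - b * c \<noteq> 0"
  shows "(pair_equiv (a \<cdot>\<^sub>m 1\<^sub>m l + b \<cdot>\<^sub>m companion chi) (c \<cdot>\<^sub>m 1\<^sub>m l + d \<cdot>\<^sub>m companion chi)
                     (1\<^sub>m l) (companion eta)
           \<longrightarrow> (\<exists>\<epsilon>. eta = Polynomial.smult \<epsilon> (mobius_poly a b c d l chi)))
       \<and> (invertible_mat (a \<cdot>\<^sub>m 1\<^sub>m l + b \<cdot>\<^sub>m companion chi)
           \<and> (\<exists>\<epsilon>. eta = Polynomial.smult \<epsilon> (mobius_poly a b c d l chi))
           \<longrightarrow> (\<forall>M. inverts_mat (a \<cdot>\<^sub>m 1\<^sub>m l + b \<cdot>\<^sub>m companion chi) M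
                     \<and> inverts_mat M (a \<cdot>\<^sub>m 1\<^sub>m l + b \<cdot>\<^sub>m companion chi)
                     \<and> M \<in> carrier_mat l l
                  \<longrightarrow> char_poly ((c \<cdot>\<^sub>m 1\<^sub>m l + d \<cdot>\<^sub>m companion chi) * M) = char_poly (companion eta)))"
proof -
  let ?h = "\<lambda>x::'a. [:x:]"
  define A where "A = a \<cdot>\<^sub>m 1\<^sub>m l + b \<cdot>\<^sub>m companion chi"
  define B where "B = c \<cdot>\<^sub>m 1\<^sub>m l + d \<cdot>\<^sub>m companion chi"
  have Phi: "companion chi \<in> carrier_mat l l" using companion_carrier[of chi] assms(3) by simp
  have Pe: "companion eta \<in> carrier_mat l l" using companion_carrier[of eta] assms(4) by simp
  have A: "A \<in> carrier_mat l l" unfolding A_def using Phi by auto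
  have B: "B \<in> carrier_mat l l" unfolding B_def using Phi by auto
  define N where "N = [:0,1:] \<cdot>\<^sub>m map_mat ?h A - map_mat ?h B"
  have detN: "det N = mobius_poly a b c d l chi"
    using det_N[OF assms(1,3)] unfolding N_def A_def B_def .
  have cpe: "char_poly (companion eta) = eta" by (rule char_poly_companion[OF assms(2)])
  have hA: "map_mat ?h A \<in> carrier_mat l l" using A by simp
  have hB: "map_mat ?h B \<in> carrier_mat l l" using B by simp
  have partA: "pair_equiv A B (1\<^sub>m l) (companion eta)
           \<longrightarrow> (\<exists>\<epsilon>. eta = Polynomial.smult \<epsilon> (mobius_poly a b c d l chi))"
  proof
    assume "pair_equiv A B (1\<^sub>m l) (companion eta)"
    then obtain P Q where P: "P \<in> carrier_mat l l" and Q: "Q \<in> carrier_mat l l"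
      and PAQ: "1\<^sub>m l = P * A * Q" and PBQ: "companion eta = P * B * Q"
      unfolding pair_equiv_def using A by auto
    have hP: "map_mat ?h P \<in> carrier_mat l l" using P by simp
    have hQ: "map_mat ?h Q \<in> carrier_mat l l" using Q by simp
    have "char_poly_matrix (companion eta) = [:0,1:] \<cdot>\<^sub>m 1\<^sub>m l - map_mat ?h (companion eta)"
      by (rule eq_matI) (use Pe in \<open>auto simp: char_poly_matrix_def\<close>)
    also have "1\<^sub>m l = map_mat ?h P * map_mat ?h A * map_mat ?h Q"
    proof -
      have "(1\<^sub>m l :: 'a poly mat) = map_mat ?h (1\<^sub>m l)" by (rule eq_matI) auto
      also have "\<dots> = map_mat ?h (P * A * Q)" using PAQ by simp
      also have "\<dots> = map_mat ?h P * map_mat ?h A * map_mat ?h Q"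
        using cph.mat_hom_mult[OF mult_carrier_mat[OF P A] Q] cph.mat_hom_mult[OF P A] by simp
      finally show ?thesis .
    qed
    also have "map_mat ?h (companion eta) = map_mat ?h P * map_mat ?h B * map_mat ?h Q"
      using PBQ cph.mat_hom_mult[OF mult_carrier_mat[OF P B] Q] cph.mat_hom_mult[OF P B] by simp
    also have "[:0,1:] \<cdot>\<^sub>m (map_mat ?h P * map_mat ?h A * map_mat ?h Q) - map_mat ?h P * map_mat ?h B * map_mat ?h Q
       = map_mat ?h P * N * map_mat ?h Q"
      unfolding N_def by (rule H1[symmetric, OF hP hA hB hQ])
    finally have "eta = det (map_mat ?h P * N * map_mat ?h Q)"
      using cpe unfolding char_poly_def by simp
    also have "\<dots> = det (map_mat ?h P) * det N * det (map_mat ?h Q)"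
    proof -
      have hN: "N \<in> carrier_mat l l" unfolding N_def by (rule minus_carrier_mat[OF hB])
      show ?thesis using det_mult[OF mult_carrier_mat[OF hP hN] hQ] det_mult[OF hP hN] by simp
    qed
    also have "\<dots> = Polynomial.smult (det P * det Q) (mobius_poly a b c d l chi)"
      unfolding detN cph.hom_det by (simp add: ac_simps)
    finally show "\<exists>\<epsilon>. eta = Polynomial.smult \<epsilon> (mobius_poly a b c d l chi)" by blast
  qed
  have partB: "invertible_mat A \<and> (\<exists>\<epsilon>. eta = Polynomial.smult \<epsilon> (mobius_poly a b c d l chi))
           \<longrightarrow> (\<forall>M. inverts_mat A M \<and> inverts_mat M A \<and> M \<in> carrier_mat l l
                  \<longrightarrow> char_poly (B * M) = char_poly (companion eta))"
  proof (intro impI allI)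
    fix M
    assume h1: "invertible_mat A \<and> (\<exists>\<epsilon>. eta = Polynomial.smult \<epsilon> (mobius_poly a b c d l chi))"
      and h2: "inverts_mat A M \<and> inverts_mat M A \<and> M \<in> carrier_mat l l"
    from h1 obtain \<epsilon> where eps: "eta = Polynomial.smult \<epsilon> (mobius_poly a b c d l chi)" by blast
    have M: "M \<in> carrier_mat l l" using h2 by blast
    have MA: "M * A = 1\<^sub>m l" using h2 M unfolding inverts_mat_def by simp
    have hM: "map_mat ?h M \<in> carrier_mat l l" using M by simp
    have BM: "B * M \<in> carrier_mat l l" using B M by simp
    have "char_poly_matrix (B * M) = [:0,1:] \<cdot>\<^sub>m 1\<^sub>m l - map_mat ?h (B * M)"
      by (rule eq_matI) (use BM in \<open>auto simp: char_poly_matrix_def\<close>)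
    also have "map_mat ?h (B * M) = map_mat ?h B * map_mat ?h M" by (rule cph.mat_hom_mult[OF B M])
    finally have "char_poly_matrix (B * M) = [:0,1:] \<cdot>\<^sub>m 1\<^sub>m l - map_mat ?h B * map_mat ?h M" .
    then have "char_poly_matrix (B * M) * map_mat ?h A
      = 1\<^sub>m l * ([:0,1:] \<cdot>\<^sub>m 1\<^sub>m l - map_mat ?h B * map_mat ?h M) * map_mat ?h A"
      using hB hM by simp
    also have "\<dots> = [:0,1:] \<cdot>\<^sub>m (1\<^sub>m l * 1\<^sub>m l * map_mat ?h A) - 1\<^sub>m l * (map_mat ?h B * map_mat ?h M) * map_mat ?h A"
      by (rule H1) (use hB hM hA in auto)
    also have "\<dots> = N"
    proof -
      have e1: "1\<^sub>m l * 1\<^sub>m l * map_mat ?h A = map_mat ?h A" using hA by simp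
      have "map_mat ?h M * map_mat ?h A = map_mat ?h (M * A)" by (rule cph.mat_hom_mult[OF M A, symmetric])
      also have "\<dots> = 1\<^sub>m l" unfolding MA by (rule eq_matI) auto
      finally have MA': "map_mat ?h M * map_mat ?h A = 1\<^sub>m l" .
      have "1\<^sub>m l * (map_mat ?h B * map_mat ?h M) * map_mat ?h A = map_mat ?h B * (map_mat ?h M * map_mat ?h A)"
        using hB hM hA by simp
      also have "\<dots> = map_mat ?h B" unfolding MA' using hB by simp
      finally show ?thesis unfolding N_def e1 by simp
    qed
    finally have "char_poly_matrix (B * M) * map_mat ?h A = N" .
    then have "det (char_poly_matrix (B * M)) * det (map_mat ?h A) = mobius_poly a b c d l chi"
      using det_mult[OF char_poly_matrix_closed[OF BM] hA] detN by simp
    then have mob: "mobius_poly a b c d l chi = Polynomial.smult (det A) (char_poly (B * M))"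
      unfolding char_poly_def cph.hom_det by (simp add: ac_simps)
    have eq: "eta = Polynomial.smult (\<epsilon> * det A) (char_poly (B * M))"
      using eps mob by simp
    have lc: "lead_coeff (char_poly (B * M)) = 1"
      using degree_monic_char_poly[OF BM] by simp
    have "lead_coeff eta = 1" using assms(2) by simp
    moreover have "lead_coeff eta = (\<epsilon> * det A) * lead_coeff (char_poly (B * M))"
      unfolding eq by (rule lead_coeff_smult)
    ultimately have "\<epsilon> * det A = 1" using lc by simp
    then have "eta = char_poly (B * M)" using eq by simp
    then show "char_poly (B * M) = char_poly (companion eta)" using cpe by simp
  qed
  show ?thesis using partA partB unfolding A_def B_def by blast
qed

end
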